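(* Let $\Omega\subset\mathbb{R}^3$ be a MAC compatible bounded domain, $(\mathcal M,\mathcal E)$ a MAC grid, $\varrho\in L_{\mathcal M}$, $\boldsymbol u=(u_1,u_2,u_3)\in\mathbf H_{\mathcal E,0}$, $i\in\{1,2,3\}$ and $\varphi=(\varphi_\sigma)\in H^{(i)}_{\mathcal E,0}$. With the primal fluxes $F_{K,\sigma}$ and dual fluxes $F_{\sigma,\varepsilon}$ defined from $(\varrho,\boldsymbol u)$ as in the context, $$\sum_{\sigma\in\mathcal E^{(i)}_{\rm int}}\ \sum_{\varepsilon\text{ face of }D_\sigma}F_{\sigma,\varepsilon}u_\varepsilon\varphi_\sigma=\sum_{j=1}^3S_j,$$ where $$S_i=\sum_{K=[\overrightarrow{\sigma\sigma'}],\ \sigma,\sigma'\in\mathcal E^{(i)}}\big(\varrho^{\rm up}_\sigma u_\sigma|D_{K,\sigma}|+\varrho^{\rm up}_{\sigma'}u_{\sigma'}|D_{K,\sigma'}|\big)(\mathcal R^{(i)}_{\mathcal M}u_i)_K\,\frac{\varphi_\sigma-\varphi_{\sigma'}}{d(\boldsymbol x_\sigma,\boldsymbol x_{\sigma'})},$$ and, for $j\neq i$, $$S_j=\sum_{\tau\in\mathcal E^{(j)}_{\rm int}}|D_\tau|\frac{\varrho^{\rm up}_\tau u_\tau}{4}\Big[(u_{\sigma_3}+u_{\sigma_1})\frac{\varphi_{\sigma_3}-\varphi_{\sigma_1}}{d(\boldsymbol x_{\sigma_1},\boldsymbol x_{\sigma_3})}+(u_{\sigma_4}+u_{\sigma_2})\frac{\varphi_{\sigma_4}-\varphi_{\sigma_2}}{d(\boldsymbol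 x_{\sigma_2},\boldsymbol x_{\sigma_4})}\Big],$$ where $\sigma_1,\dots,\sigma_4$ are the four faces of $\mathcal E^{(i)}$ neighbouring $\tau$ (i.e. the faces in $\mathcal E^{(i)}$ of the two cells sharing $\tau$), labelled so that $\boldsymbol x_{\sigma_1}-\boldsymbol x_{\sigma_3}=\boldsymbol x_{\sigma_2}-\boldsymbol x_{\sigma_4}=\beta\boldsymbol e_j$ for some $\beta>0$.
   Context: MAC compatible domain: bounded connected open $\Omega$ whose closure is a finite union of closed rectangular parallelepipeds with faces orthogonal to $\boldsymbol e_1,\boldsymbol e_2,\boldsymbol e_3$. MAC grid $(\mathcal M,\mathcal E)$: structured partition $\mathcal M$ of $\Omega$ into rectangular parallelepipeds $K$; faces $\mathcal E$, $\mathcal E(K)$ the faces of $K$, $\mathcal E^{(i)}$ (resp. $\mathcal E^{(i)}_{\rm int}$) the (interior) faces orthogonal to $\boldsymbol e_i$; $\sigma=K|L$ common face; $\boldsymbol x_\sigma$ face mass centre; $d(\cdot,\cdot)$ Euclidean distance. $K=[\overrightarrow{\sigma\sigma'}]$ means $\sigma,\sigma'\in\mathcal E^{(i)}\cap\mathcal E(K)$ with $(\boldsymbol x_{\sigma'}-\boldsymbol x_\sigma)\cdot\boldsymbol e_i>0$. $D_{K,\sigma}$ is the half of $K$ adjacent to $\sigma$; dual cells $D_\sigma=D_{K,\sigma}\cup D_{L,\sigma}$ for $\sigma=K|L$, $D_{K,\sigma}$ for boundary $\sigma$; dual faces $\varepsilon=\sigma|\sigma'$ separate $D_\sigma,D_{\sigma'}$.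 $L_{\mathcal M}$: piecewise constants on cells (values $\varrho_K$); $H^{(i)}_{\mathcal E,0}$: piecewise constants on $D_\sigma$, $\sigma\in\mathcal E^{(i)}$ (values $u_\sigma$), vanishing for boundary $\sigma$; $\mathbf H_{\mathcal E,0}=\prod_iH^{(i)}_{\mathcal E,0}$; for $\tau\in\mathcal E^{(j)}$, $u_\tau$ denotes the value of $u_j$ on $D_\tau$. Fluxes: $u_{K,\sigma}=u_\sigma\boldsymbol e_i\cdot\boldsymbol n_{K,\sigma}$ for $\sigma\in\mathcal E^{(i)}\cap\mathcal E(K)$; $F_{K,\sigma}=|\sigma|\varrho^{\rm up}_\sigma u_{K,\sigma}$ with $\varrho^{\rm up}_\sigma=\varrho_K$ if $u_{K,\sigma}\ge0$ and $\varrho_L$ otherwise ($\sigma=K|L$), and $F_{K,\sigma}=0$ on boundary faces. Dual fluxes for $\sigma=K|L\in\mathcal E^{(i)}_{\rm int}$: if $\varepsilon=\sigma|\sigma'\subset K$ is orthogonal to $\boldsymbol e_i$ then $F_{\sigma,\varepsilon}=\frac12[F_{K,\sigma}\boldsymbol n_{K,\sigma}+F_{K,\sigma'}\boldsymbol n_{K,\sigma'}]\cdot\boldsymbol n_{D_\sigma,\varepsilon}$; if $\varepsilon$ is orthogonal to $\boldsymbol e_j$, $j\neq i$, and $\varepsilon\subset\tau\cup\tau'$ with $\tau\in\mathcal E(K)$, $\tau'\in\mathcal E(L)$, then $F_{\sigma,\varepsilon}=\frac12(F_{K,\tau}+F_{L,\tau'})$; fluxes through dual faces on $\partial\Omega$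 are zero. $u_\varepsilon=\frac12(u_\sigma+u_{\sigma'})$ for $\varepsilon=\sigma|\sigma'$ interior. $(\mathcal R^{(i)}_{\mathcal M}u_i)_K=\frac12\sum_{\sigma\in\mathcal E^{(i)}\cap\mathcal E(K)}u_\sigma$. *)

theory Defs
  imports "HOL-Analysis.Analysis"
begin

text \<open>Structured MAC grid in R^3: a tensor-product grid with plane coordinates
  g d a (direction d, plane number a, strictly increasing in a); the cell with index
  k :: int^3 is the box [g d (k$d), g d (k$d+1)] in each direction d; C is the (finite)
  set of cells forming the partition M of the MAC compatible domain Omega.
  Directions e_1,e_2,e_3 are indexed by the type 3.
  Face (i,k): the face orthogonal to e_i lying on the plane g i (k$i), shared by the
  cells k - e i (below, in direction i) and k (above).\<close>

definition e :: "3 \<Rightarrow> int^3" where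
  "e d = axis d 1"

definition cell_box :: "(3 \<Rightarrow> int \<Rightarrow> real) \<Rightarrow> int^3 \<Rightarrow> (real^3) set" where
  "cell_box g k = cbox (\<chi> d. g d (k$d)) (\<chi> d. g d (k$d + 1))"

definition MAC_domain :: "(3 \<Rightarrow> int \<Rightarrow> real) \<Rightarrow> (int^3) set \<Rightarrow> (real^3) set" where
  "MAC_domain g C = interior (\<Union>k\<in>C. cell_box g k)"

definition MAC_grid :: "(3 \<Rightarrow> int \<Rightarrow> real) \<Rightarrow> (int^3) set \<Rightarrow> bool" where
  "MAC_grid g C \<longleftrightarrow> (\<forall>d. strict_mono (g d)) \<and> finite C \<and> C \<noteq> {}
      \<and> connected (MAC_domain g C)"

definition is_face :: "(int^3) set \<Rightarrow> 3 \<Rightarrow> int^3 \<Rightarrow> bool" where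
  "is_face C i k \<longleftrightarrow> k \<in> C \<or> k - e i \<in> C"

definition int_face :: "(int^3) set \<Rightarrow> 3 \<Rightarrow> int^3 \<Rightarrow> bool" where
  "int_face C i k \<longleftrightarrow> k \<in> C \<and> k - e i \<in> C"

definition h :: "(3 \<Rightarrow> int \<Rightarrow> real) \<Rightarrow> 3 \<Rightarrow> int^3 \<Rightarrow> real" where
  "h g d k = g d (k$d + 1) - g d (k$d)"

definition cell_vol :: "(3 \<Rightarrow> int \<Rightarrow> real) \<Rightarrow> int^3 \<Rightarrow> real" where
  "cell_vol g k = (\<Prod>d\<in>UNIV. h g d k)"

definition half_vol :: "(3 \<Rightarrow> int \<Rightarrow> real) \<Rightarrow> int^3 \<Rightarrow> real" where
  "half_vol g K = cell_vol g K / 2"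

definition dual_vol :: "(3 \<Rightarrow> int \<Rightarrow> real) \<Rightarrow> 3 \<Rightarrow> int^3 \<Rightarrow> real" where
  "dual_vol g i k = half_vol g (k - e i) + half_vol g k"

definition face_area :: "(3 \<Rightarrow> int \<Rightarrow> real) \<Rightarrow> 3 \<Rightarrow> int^3 \<Rightarrow> real" where
  "face_area g i k = (\<Prod>d\<in>UNIV - {i}. h g d k)"

definition face_centre :: "(3 \<Rightarrow> int \<Rightarrow> real) \<Rightarrow> 3 \<Rightarrow> int^3 \<Rightarrow> real^3" where
  "face_centre g i k = (\<chi> d. if d = i then g i (k$i) else (g d (k$d) + g d (k$d + 1)) / 2)"

text \<open>Outward unit normal n_{K,sigma} of cell K on its face (i,k) (k = K: lower face,
  k = K + e i: upper face), and the other cell L with sigma = K|L.\<close>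
definition cell_normal :: "3 \<Rightarrow> int^3 \<Rightarrow> int^3 \<Rightarrow> real^3" where
  "cell_normal i K k = (if k = K then - axis i 1 else axis i 1)"

definition other_cell :: "3 \<Rightarrow> int^3 \<Rightarrow> int^3 \<Rightarrow> int^3" where
  "other_cell i K k = (if k = K then K - e i else K + e i)"

text \<open>u_{K,sigma} = u_sigma e_i . n_{K,sigma}; u i k is the value of u_i on D_sigma, sigma=(i,k).\<close>
definition u_K :: "(3 \<Rightarrow> int^3 \<Rightarrow> real) \<Rightarrow> 3 \<Rightarrow> int^3 \<Rightarrow> int^3 \<Rightarrow> real" where
  "u_K u i K k = u i k * (axis i 1 \<bullet> cell_normal i K k)"

definition primal_flux :: "(3 \<Rightarrow> int \<Rightarrow> real) \<Rightarrow> (int^3) set \<Rightarrow> (int^3 \<Rightarrow> real)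
    \<Rightarrow> (3 \<Rightarrow> int^3 \<Rightarrow> real) \<Rightarrow> 3 \<Rightarrow> int^3 \<Rightarrow> int^3 \<Rightarrow> real" where
  "primal_flux g C \<rho> u i K k =
     (if int_face C i k then
        face_area g i k * (if u_K u i K k \<ge> 0 then \<rho> K else \<rho> (other_cell i K k)) * u_K u i K k
      else 0)"

text \<open>The face of cell M orthogonal to e_j with outward normal s e_j (s = -1 or 1).\<close>
definition side_face :: "3 \<Rightarrow> int^3 \<Rightarrow> int \<Rightarrow> int^3" where
  "side_face j M s = (if s = -1 then M else M + e j)"

text \<open>Dual faces of D_sigma, sigma = (i,k) interior (sigma = K|L, K = k - e i, L = k), are
  indexed by (j,s), s in {-1,1}: the face of D_sigma orthogonal to e_j with outward normal
  n_{D_sigma,eps} = s e_j.  Its neighbour sigma' (eps = sigma|sigma') is (i, side k).\<close>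
definition dual_nb :: "3 \<Rightarrow> int^3 \<Rightarrow> int \<Rightarrow> int^3" where
  "dual_nb j k s = (if s = -1 then k - e j else k + e j)"

definition dual_flux :: "(3 \<Rightarrow> int \<Rightarrow> real) \<Rightarrow> (int^3) set \<Rightarrow> (int^3 \<Rightarrow> real)
    \<Rightarrow> (3 \<Rightarrow> int^3 \<Rightarrow> real) \<Rightarrow> 3 \<Rightarrow> int^3 \<Rightarrow> 3 \<Rightarrow> int \<Rightarrow> real" where
  "dual_flux g C \<rho> u i k j s =
     (let K = k - e i; L = k; n\<epsilon> = real_of_int s *\<^sub>R axis j (1::real) in
      if j = i then
        (let M = (if s = -1 then K else L); k' = dual_nb i k s in
          ((1/2) *\<^sub>R (primal_flux g C \<rho> u i M k *\<^sub>R cell_normal i M k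
                     + primal_flux g C \<rho> u i M k' *\<^sub>R cell_normal i M k')) \<bullet> n\<epsilon>)
      else
        (let \<tau> = side_face j K s; \<tau>' = side_face j L s in
          if \<not> int_face C j \<tau> \<and> \<not> int_face C j \<tau>' then 0
          else (primal_flux g C \<rho> u j K \<tau> + primal_flux g C \<rho> u j L \<tau>') / 2))"

definition dual_u :: "(3 \<Rightarrow> int^3 \<Rightarrow> real) \<Rightarrow> 3 \<Rightarrow> int^3 \<Rightarrow> 3 \<Rightarrow> int \<Rightarrow> real" where
  "dual_u u i k j s = (u i k + u i (dual_nb j k s)) / 2"

definition conv_lhs :: "(3 \<Rightarrow> int \<Rightarrow> real) \<Rightarrow> (int^3) set \<Rightarrow> (int^3 \<Rightarrow> real)
    \<Rightarrow> (3 \<Rightarrow> int^3 \<Rightarrow> real) \<Rightarrow> 3 \<Rightarrow> (int^3 \<Rightarrow> real) \<Rightarrow> real" where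
  "conv_lhs g C \<rho> u i \<phi> =
     (\<Sum>k\<in>{k. int_face C i k}. \<Sum>j\<in>UNIV. \<Sum>s\<in>{-1, 1::int}.
        dual_flux g C \<rho> u i k j s * dual_u u i k j s * \<phi> k)"

definition rho_up :: "(int^3 \<Rightarrow> real) \<Rightarrow> (3 \<Rightarrow> int^3 \<Rightarrow> real) \<Rightarrow> 3 \<Rightarrow> int^3 \<Rightarrow> real" where
  "rho_up \<rho> u i k = (if u i k \<ge> 0 then \<rho> (k - e i) else \<rho> k)"

definition reconstr :: "(3 \<Rightarrow> int^3 \<Rightarrow> real) \<Rightarrow> 3 \<Rightarrow> int^3 \<Rightarrow> real" where
  "reconstr u i K = (u i K + u i (K + e i)) / 2"

text \<open>For j \<noteq> i: tau = (j,k), the cells sharing tau are K = k - e j (below) and L = k (above);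
  sigma_1 = (i,L), sigma_2 = (i,L+e i), sigma_3 = (i,K), sigma_4 = (i,K+e i), so that
  x_sigma1 - x_sigma3 = x_sigma2 - x_sigma4 = beta e_j with beta > 0.\<close>
definition S_term :: "(3 \<Rightarrow> int \<Rightarrow> real) \<Rightarrow> (int^3) set \<Rightarrow> (int^3 \<Rightarrow> real)
    \<Rightarrow> (3 \<Rightarrow> int^3 \<Rightarrow> real) \<Rightarrow> 3 \<Rightarrow> (int^3 \<Rightarrow> real) \<Rightarrow> 3 \<Rightarrow> real" where
  "S_term g C \<rho> u i \<phi> j =
    (if j = i then
       (\<Sum>K\<in>C. let \<sigma> = K; \<sigma>' = K + e i in
          (rho_up \<rho> u i \<sigma> * u i \<sigma> * half_vol g K + rho_up \<rho> u i \<sigma>' * u i \<sigma>' * half_vol g K)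
          * reconstr u i K
          * (\<phi> \<sigma> - \<phi> \<sigma>') / dist (face_centre g i \<sigma>) (face_centre g i \<sigma>'))
     else
       (\<Sum>k\<in>{k. int_face C j k}. let L = k; K = k - e j;
          \<sigma>1 = L; \<sigma>2 = L + e i; \<sigma>3 = K; \<sigma>4 = K + e i in
          dual_vol g j k * (rho_up \<rho> u j k * u j k / 4)
          * ((u i \<sigma>3 + u i \<sigma>1) * (\<phi> \<sigma>3 - \<phi> \<sigma>1) / dist (face_centre g i \<sigma>1) (face_centre g i \<sigma>3)
           + (u i \<sigma>4 + u i \<sigma>2) * (\<phi> \<sigma>4 - \<phi> \<sigma>2) / dist (face_centre g i \<sigma>2) (face_centre g i \<sigma>4))))"

end

theory Submission
  imports Defs "HOL-Library.Groups_Big_Fun"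
begin

lemma e_comp [simp]: "(e j)$d = (if d = j then 1 else 0)"
  by (simp add: e_def axis_def)

lemma e_nz [simp]: "e j \<noteq> 0"
proof
  assume "e j = 0"
  then have "(e j)$j = 0" by simp
  then show False by simp
qed

lemma h_shift: "d \<noteq> j \<Longrightarrow> h g d (k + e j) = h g d k"
  "d \<noteq> j \<Longrightarrow> h g d (k - e j) = h g d k"
  by (simp_all add: h_def)

lemma fa_shift: "face_area g j (k + e j) = face_area g j k"
  "face_area g j (k - e j) = face_area g j k"
  unfolding face_area_def by (rule prod.cong; simp add: h_shift)+

lemma cell_vol_split: "cell_vol g k = h g j k * face_area g j k"
  unfolding cell_vol_def face_area_def
  by (rule prod.remove) auto

lemma dist_1d:
  fixes x y :: "real^3"
  assumes "\<forall>d. d \<noteq> j \<longrightarrow> x$d = y$d"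
  shows "dist x y = \<bar>x$j - y$j\<bar>"
proof -
  have "x - y = (x$j - y$j) *\<^sub>R axis j 1"
    using assms by (auto simp: vec_eq_iff axis_def)
  then show ?thesis by (simp add: dist_norm)
qed

lemma SA_sum:
  fixes f :: "'a \<Rightarrow> real"
  assumes "finite A" "\<And>x. x \<notin> A \<Longrightarrow> f x = 0"
  shows "sum f A = Sum_any f"
  using assms by (intro Sum_any.expand_superset[symmetric]) auto

lemma SA_shift:
  fixes f :: "int^3 \<Rightarrow> real"
  shows "Sum_any (\<lambda>x. f (x + c)) = Sum_any f"
proof -
  have "bij (\<lambda>x::int^3. x + c)"
    by (rule bijI') (auto intro: exI[of _ "_ - c"])
  then show ?thesis
    by (intro Sum_any.reindex_cong[symmetric]) (auto simp: o_def)
qed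

definition GG :: "(3 \<Rightarrow> int \<Rightarrow> real) \<Rightarrow> (int^3 \<Rightarrow> real) \<Rightarrow> (3 \<Rightarrow> int^3 \<Rightarrow> real) \<Rightarrow> 3 \<Rightarrow> int^3 \<Rightarrow> real" where
  "GG g \<rho> u j t = face_area g j t * rho_up \<rho> u j t * u j t"

lemma pf_up:
  assumes u0: "\<forall>j k. \<not> int_face C j k \<longrightarrow> u j k = 0" and "K = t - e j"
  shows "primal_flux g C \<rho> u j K t = GG g \<rho> u j t"
proof -
  have ne: "t \<noteq> K" using assms(2) by simp
  have ax: "axis j (1::real) \<bullet> axis j 1 = 1" by (simp add: inner_axis_axis)
  show ?thesis
    using u0 ne ax assms(2)
    by (auto simp: primal_flux_def GG_def u_K_def cell_normal_def other_cell_def rho_up_def)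
qed

lemma pf_low:
  assumes u0: "\<forall>j k. \<not> int_face C j k \<longrightarrow> u j k = 0"
  shows "primal_flux g C \<rho> u j t t = - GG g \<rho> u j t"
proof -
  have ax: "axis j (1::real) \<bullet> - axis j 1 = -1" by (simp add: inner_axis_axis)
  show ?thesis
    using u0 ax
    by (auto simp: primal_flux_def GG_def u_K_def cell_normal_def other_cell_def rho_up_def)
qed

lemma df_ii:
  assumes u0: "\<forall>j k. \<not> int_face C j k \<longrightarrow> u j k = 0"
  shows "dual_flux g C \<rho> u i k i 1 = (GG g \<rho> u i k + GG g \<rho> u i (k + e i)) / 2"
    and "dual_flux g C \<rho> u i k i (-1) = - (GG g \<rho> u i (k - e i) + GG g \<rho> u i k) / 2"
proof -
  have ne1: "k + e i \<noteq> k" and ne2: "k \<noteq> k - e i" by simp_all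
  have p1: "primal_flux g C \<rho> u i k (k + e i) = GG g \<rho> u i (k + e i)"
    by (rule pf_up[OF u0]) simp
  have p2: "primal_flux g C \<rho> u i (k - e i) k = GG g \<rho> u i k"
    by (rule pf_up[OF u0]) simp
  show "dual_flux g C \<rho> u i k i 1 = (GG g \<rho> u i k + GG g \<rho> u i (k + e i)) / 2"
    using ne1 p1 pf_low[OF u0]
    by (simp add: dual_flux_def dual_nb_def cell_normal_def Let_def inner_axis_axis
        algebra_simps inner_add_left)
  show "dual_flux g C \<rho> u i k i (-1) = - (GG g \<rho> u i (k - e i) + GG g \<rho> u i k) / 2"
    using ne2 p2 pf_low[OF u0]
    by (simp add: dual_flux_def dual_nb_def cell_normal_def Let_def inner_axis_axis
        algebra_simps inner_add_left)
qed

lemma df_ij: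
  assumes u0: "\<forall>j k. \<not> int_face C j k \<longrightarrow> u j k = 0" and ji: "j \<noteq> i"
  shows "dual_flux g C \<rho> u i k j 1 = (GG g \<rho> u j (k - e i + e j) + GG g \<rho> u j (k + e j)) / 2"
    and "dual_flux g C \<rho> u i k j (-1) = - (GG g \<rho> u j (k - e i) + GG g \<rho> u j k) / 2"
proof -
  have G0: "\<not> int_face C j t \<Longrightarrow> GG g \<rho> u j t = 0" for t
    using u0 by (simp add: GG_def)
  have p1: "primal_flux g C \<rho> u j (k - e i) (k - e i + e j) = GG g \<rho> u j (k - e i + e j)"
    by (rule pf_up[OF u0]) simp
  have p2: "primal_flux g C \<rho> u j k (k + e j) = GG g \<rho> u j (k + e j)"
    by (rule pf_up[OF u0]) simp
  show "dual_flux g C \<rho> u i k j 1 = (GG g \<rho> u j (k - e i + e j) + GG g \<rho> u j (k + e j)) / 2"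
    using ji p1 p2 G0[of "k - e i + e j"] G0[of "k + e j"]
    by (auto simp add: dual_flux_def side_face_def Let_def)
  show "dual_flux g C \<rho> u i k j (-1) = - (GG g \<rho> u j (k - e i) + GG g \<rho> u j k) / 2"
    using ji pf_low[OF u0] G0[of "k - e i"] G0[of "k"]
    by (auto simp add: dual_flux_def side_face_def Let_def)
qed

lemma h_pos: "strict_mono (g d) \<Longrightarrow> h g d k > 0"
  by (simp add: h_def strict_mono_def)

lemma case_ii:
  assumes MG: "MAC_grid g C"
    and u0: "\<forall>j k. \<not> int_face C j k \<longrightarrow> u j k = 0"
    and p0: "\<forall>k. \<not> int_face C i k \<longrightarrow> \<phi> k = 0"
  shows "(\<Sum>k\<in>{k. int_face C i k}. \<Sum>s\<in>{-1, 1::int}.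
        dual_flux g C \<rho> u i k i s * dual_u u i k i s * \<phi> k) = S_term g C \<rho> u i \<phi> i"
proof -
  define I where "I = {k. int_face C i k}"
  have finC: "finite C" and sm: "\<And>d. strict_mono (g d)" using MG by (auto simp: MAC_grid_def)
  have IC: "I \<subseteq> C" by (auto simp: I_def int_face_def)
  have finI: "finite I" using IC finC finite_subset by blast
  define P where "P k = (GG g \<rho> u i k + GG g \<rho> u i (k + e i)) / 2 * reconstr u i k" for k
  have L: "(\<Sum>k\<in>I. \<Sum>s\<in>{-1, 1::int}.
        dual_flux g C \<rho> u i k i s * dual_u u i k i s * \<phi> k)
      = (\<Sum>k\<in>I. P k * \<phi> k - P (k - e i) * \<phi> k)"
  proof (rule sum.cong[OF refl])
    fix k
    show "(\<Sum>s\<in>{-1, 1::int}. dual_flux g C \<rho> u i k i s * dual_u u i k i s * \<phi> k)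
        = P k * \<phi> k - P (k - e i) * \<phi> k"
      by (simp add: df_ii[OF u0] P_def dual_u_def dual_nb_def reconstr_def field_simps)
  qed
  also have "\<dots> = Sum_any (\<lambda>k. P k * \<phi> k) - Sum_any (\<lambda>k. P (k - e i) * \<phi> k)"
  proof -
    have "sum (\<lambda>k. P k * \<phi> k) I = Sum_any (\<lambda>k. P k * \<phi> k)"
      by (rule SA_sum[OF finI]) (simp add: I_def p0)
    moreover have "sum (\<lambda>k. P (k - e i) * \<phi> k) I = Sum_any (\<lambda>k. P (k - e i) * \<phi> k)"
      by (rule SA_sum[OF finI]) (simp add: I_def p0)
    ultimately show ?thesis by (simp add: sum_subtractf)
  qed
  finally have L': "(\<Sum>k\<in>I. \<Sum>s\<in>{-1, 1::int}.
        dual_flux g C \<rho> u i k i s * dual_u u i k i s * \<phi> k)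
      = Sum_any (\<lambda>k. P k * \<phi> k) - Sum_any (\<lambda>k. P (k - e i) * \<phi> k)" .
  have R: "S_term g C \<rho> u i \<phi> i = (\<Sum>K\<in>C. P K * \<phi> K - P K * \<phi> (K + e i))"
    unfolding S_term_def Let_def if_P[OF refl]
  proof (rule sum.cong[OF refl])
    fix K
    have hp: "h g i K > 0" using h_pos[OF sm] .
    have d: "dist (face_centre g i K) (face_centre g i (K + e i)) = h g i K"
      using hp by (subst dist_1d[where j = i]) (auto simp: face_centre_def h_def)
    have hv: "half_vol g K = h g i K * face_area g i K / 2"
      by (simp add: half_vol_def cell_vol_split[of g K i])
    show "(rho_up \<rho> u i K * u i K * half_vol g K + rho_up \<rho> u i (K + e i) * u i (K + e i) * half_vol g K) *
          reconstr u i K * (\<phi> K - \<phi> (K + e i)) / dist (face_centre g i K) (face_centre g i (K + e i))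
        = P K * \<phi> K - P K * \<phi> (K + e i)"
      using hp unfolding d hv P_def GG_def fa_shift
      by (simp add: field_simps)
  qed
  also have "\<dots> = Sum_any (\<lambda>k. P k * \<phi> k) - Sum_any (\<lambda>K. P K * \<phi> (K + e i))"
  proof -
    have a: "\<phi> K = 0" if "K \<notin> C" for K using that p0 IC I_def by auto
    have b: "\<phi> (K + e i) = 0" if "K \<notin> C" for K using that p0 by (auto simp: int_face_def)
    have "sum (\<lambda>k. P k * \<phi> k) C = Sum_any (\<lambda>k. P k * \<phi> k)"
      by (rule SA_sum[OF finC]) (simp add: a)
    moreover have "sum (\<lambda>K. P K * \<phi> (K + e i)) C = Sum_any (\<lambda>K. P K * \<phi> (K + e i))"
      by (rule SA_sum[OF finC]) (simp add: b)
    ultimately show ?thesis by (simp add: sum_subtractf)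
  qed
  also have "Sum_any (\<lambda>K. P K * \<phi> (K + e i)) = Sum_any (\<lambda>k. P (k - e i) * \<phi> k)"
    using SA_shift[of "\<lambda>k. P (k - e i) * \<phi> k" "e i"] by simp
  finally show ?thesis using L' I_def by simp
qed

lemma case_ij:
  assumes MG: "MAC_grid g C"
    and u0: "\<forall>j k. \<not> int_face C j k \<longrightarrow> u j k = 0"
    and p0: "\<forall>k. \<not> int_face C i k \<longrightarrow> \<phi> k = 0"
    and ji: "j \<noteq> i"
  shows "(\<Sum>k\<in>{k. int_face C i k}. \<Sum>s\<in>{-1, 1::int}.
        dual_flux g C \<rho> u i k j s * dual_u u i k j s * \<phi> k) = S_term g C \<rho> u i \<phi> j"
proof -
  define I where "I = {k. int_face C i k}"
  define J where "J = {k. int_face C j k}"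
  have finC: "finite C" and sm: "\<And>d. strict_mono (g d)" using MG by (auto simp: MAC_grid_def)
  have IC: "I \<subseteq> C" by (auto simp: I_def int_face_def)
  have finI: "finite I" using IC finC finite_subset by blast
  have JC: "J \<subseteq> C" by (auto simp: J_def int_face_def)
  have finJ: "finite J" using JC finC finite_subset by blast
  define G where "G = GG g \<rho> u j"
  have G0: "G t = 0" if "t \<notin> J" for t using that u0 by (simp add: G_def GG_def J_def)
  define H1 where "H1 t = G t / 4 * (u i (t - e j) + u i t) * \<phi> (t - e j)" for t
  define H2 where "H2 t = - (G t / 4 * (u i (t - e j) + u i t) * \<phi> t)" for t
  define H3 where "H3 t = G t / 4 * (u i (t - e j + e i) + u i (t + e i)) * \<phi> (t - e j + e i)" for t
  define H4 where "H4 t = - (G t / 4 * (u i (t - e j + e i) + u i (t + e i)) * \<phi> (t + e i))" for t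
  have v1: "k - e i + e j - e j + e i = k" "k - e i + e j + e i = k + e j" for k
    by (simp_all add: algebra_simps)
  have "(\<Sum>k\<in>I. \<Sum>s\<in>{-1, 1::int}.
        dual_flux g C \<rho> u i k j s * dual_u u i k j s * \<phi> k)
      = (\<Sum>k\<in>I. H1 (k + e j) + H2 k + H3 (k - e i + e j) + H4 (k - e i))"
  proof (rule sum.cong[OF refl])
    fix k
    show "(\<Sum>s\<in>{-1, 1::int}. dual_flux g C \<rho> u i k j s * dual_u u i k j s * \<phi> k)
        = H1 (k + e j) + H2 k + H3 (k - e i + e j) + H4 (k - e i)"
      by (simp add: df_ij[OF u0 ji] H1_def H2_def H3_def H4_def G_def v1 dual_u_def dual_nb_def
          field_simps)
  qed
  also have "\<dots> = Sum_any (\<lambda>k. H1 (k + e j)) + Sum_any H2 + Sum_any (\<lambda>k. H3 (k - e i + e j))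
       + Sum_any (\<lambda>k. H4 (k - e i))"
  proof -
    have "sum (\<lambda>k. H1 (k + e j)) I = Sum_any (\<lambda>k. H1 (k + e j))"
      by (rule SA_sum[OF finI]) (simp add: I_def p0 H1_def)
    moreover have "sum H2 I = Sum_any H2"
      by (rule SA_sum[OF finI]) (simp add: I_def p0 H2_def)
    moreover have "sum (\<lambda>k. H3 (k - e i + e j)) I = Sum_any (\<lambda>k. H3 (k - e i + e j))"
      by (rule SA_sum[OF finI]) (simp add: I_def p0 H3_def v1)
    moreover have "sum (\<lambda>k. H4 (k - e i)) I = Sum_any (\<lambda>k. H4 (k - e i))"
      by (rule SA_sum[OF finI]) (simp add: I_def p0 H4_def)
    ultimately show ?thesis by (simp add: sum.distrib)
  qed
  also have "\<dots> = Sum_any H1 + Sum_any H2 + Sum_any H3 + Sum_any H4"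
  proof -
    have "(\<lambda>k. H3 (k - e i + e j)) = (\<lambda>k. H3 (k + (e j - e i)))"
      by (simp add: algebra_simps)
    then have e3: "Sum_any (\<lambda>k. H3 (k - e i + e j)) = Sum_any H3"
      by (simp only: SA_shift)
    show ?thesis
      using SA_shift[of H1 "e j"] e3 SA_shift[of H4 "- e i"]
      by (simp add: add.assoc)
  qed
  also have "\<dots> = (\<Sum>k\<in>J. H1 k + H2 k + H3 k + H4 k)"
  proof -
    have "sum H1 J = Sum_any H1" by (rule SA_sum[OF finJ]) (simp add: G0 H1_def)
    moreover have "sum H2 J = Sum_any H2" by (rule SA_sum[OF finJ]) (simp add: G0 H2_def)
    moreover have "sum H3 J = Sum_any H3" by (rule SA_sum[OF finJ]) (simp add: G0 H3_def)
    moreover have "sum H4 J = Sum_any H4" by (rule SA_sum[OF finJ]) (simp add: G0 H4_def)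
    ultimately show ?thesis by (simp add: sum.distrib)
  qed
  also have "\<dots> = S_term g C \<rho> u i \<phi> j"
    unfolding S_term_def Let_def if_not_P[OF ji] J_def[symmetric]
  proof (rule sum.cong[OF refl])
    fix k
    define D where "D = (g j (k$j + 1) - g j (k$j - 1)) / 2"
    have Dp: "D > 0" using sm[of j] by (simp add: D_def strict_mono_def)
    have d1: "dist (face_centre g i k) (face_centre g i (k - e j)) = D"
      using Dp ji by (subst dist_1d[where j = j]) (auto simp: face_centre_def D_def field_simps)
    have d2: "dist (face_centre g i (k + e i)) (face_centre g i (k - e j + e i)) = D"
      using Dp ji by (subst dist_1d[where j = j]) (auto simp: face_centre_def D_def field_simps)
    have dv: "dual_vol g j k = face_area g j k * D"
      by (simp add: dual_vol_def half_vol_def cell_vol_split[of g _ j] fa_shift D_def h_def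
          field_simps)
    show "H1 k + H2 k + H3 k + H4 k =
      dual_vol g j k * (rho_up \<rho> u j k * u j k / 4) *
         ((u i (k - e j) + u i k) * (\<phi> (k - e j) - \<phi> k) / dist (face_centre g i k) (face_centre g i (k - e j)) +
          (u i (k - e j + e i) + u i (k + e i)) * (\<phi> (k - e j + e i) - \<phi> (k + e i)) /
          dist (face_centre g i (k + e i)) (face_centre g i (k - e j + e i)))"
      using Dp unfolding d1 d2 dv
      by (simp add: H1_def H2_def H3_def H4_def G_def GG_def field_simps)
  qed
  finally show ?thesis using I_def by simp
qed

theorem lemma7p3:
  fixes g :: "3 \<Rightarrow> int \<Rightarrow> real" and C :: "(int^3) set" and \<rho> :: "int^3 \<Rightarrow> real"
    and u :: "3 \<Rightarrow> int^3 \<Rightarrow> real" and i :: 3 and \<phi> :: "int^3 \<Rightarrow> real"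
  assumes "MAC_grid g C"
    and "\<forall>j k. \<not> int_face C j k \<longrightarrow> u j k = 0"
    and "\<forall>k. \<not> int_face C i k \<longrightarrow> \<phi> k = 0"
  shows "conv_lhs g C \<rho> u i \<phi> = (\<Sum>j\<in>UNIV. S_term g C \<rho> u i \<phi> j)"
proof -
  have "conv_lhs g C \<rho> u i \<phi> = (\<Sum>j\<in>UNIV. \<Sum>k\<in>{k. int_face C i k}. \<Sum>s\<in>{-1, 1::int}.
        dual_flux g C \<rho> u i k j s * dual_u u i k j s * \<phi> k)"
    unfolding conv_lhs_def by (rule sum.swap)
  also have "\<dots> = (\<Sum>j\<in>UNIV. S_term g C \<rho> u i \<phi> j)"
  proof (rule sum.cong[OF refl])
    fix j
    show "(\<Sum>k\<in>{k. int_face C i k}. \<Sum>s\<in>{-1, 1::int}.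
        dual_flux g C \<rho> u i k j s * dual_u u i k j s * \<phi> k) = S_term g C \<rho> u i \<phi> j"
    proof (cases "j = i")
      case True
      then show ?thesis using case_ii[OF assms] by simp
    next
      case False
      then show ?thesis using case_ij[OF assms False] by simp
    qed
  qed
  finally show ?thesis .
qed

end
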